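(* Let $\mathcal H$ be a complex Hilbert space of dimension $n$, let $m\ge 1$ and $k>1$ be integers, and let $\mathbf A=(A_1,\dots,A_m)$ be an $m$-tuple of bounded self-adjoint operators on $\mathcal H$. If $n\ge (k-1)(m+1)^2$, then $\Lambda_k(\mathbf A)\neq\emptyset$.
   Context: For an $m$-tuple $\mathbf A=(A_1,\dots,A_m)$ of bounded self-adjoint operators on a complex Hilbert space $\mathcal H$ and a positive integer $k$, the joint rank-$k$ numerical range is $\Lambda_k(\mathbf A)=\{(a_1,\dots,a_m)\in\mathbb R^m:$ there is an orthogonal projection $P$ of rank $k$ on $\mathcal H$ with $PA_jP=a_jP$ for $j=1,\dots,m\}$. *)

theory Defs
  imports "HOL-Analysis.Analysis"
begin

text \<open>The Hilbert space of dimension n is modelled as complex^'n with CARD('n) = n;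
  bounded operators on it are complex matrices complex^'n^'n acting by *v.\<close>

definition cmat_adjoint :: "complex^'n^'m \<Rightarrow> complex^'m^'n" where
  "cmat_adjoint A = (\<chi> i j. cnj (A $ j $ i))"

definition self_adjoint :: "complex^'n^'n \<Rightarrow> bool" where
  "self_adjoint A \<longleftrightarrow> cmat_adjoint A = A"

definition orth_projection :: "complex^'n^'n \<Rightarrow> bool" where
  "orth_projection P \<longleftrightarrow> self_adjoint P \<and> P ** P = P"

text \<open>Joint rank-k numerical range of an m-tuple (list of length m) of operators;
  points of R^m are represented as real lists of length m.\<close>

definition joint_rank_k_numrange :: "nat \<Rightarrow> (complex^'n^'n) list \<Rightarrow> real list set" where
  "joint_rank_k_numrange k As =
     {a. length a = length As \<and>
         (\<exists>P. orth_projection P \<and> rank P = k \<and>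
              (\<forall>j < length As. P ** (As ! j) ** P = (a ! j) *\<^sub>R P))}"

end

theory Submission
  imports Defs
begin



lemma closest_dot_ge:
  fixes K :: "'a::euclidean_space set"
  assumes "convex K" "compact K" "K \<noteq> {}" "y \<in> K"
  shows "inner (closest_point K 0) y \<ge> inner (closest_point K 0) (closest_point K 0)"
proof -
  let ?p = "closest_point K 0"
  have cl: "closed K" using assms(2) compact_imp_closed by blast
  have p: "?p \<in> K" using closest_point_in_set[OF cl assms(3)] .
  have "inner (0 - ?p) (y - ?p) \<le> 0"
    by (rule any_closest_point_dot[OF assms(1) cl p assms(4)])
       (intro ballI closest_point_le[OF cl])
  then show ?thesis by (simp add: inner_diff_right)
qed

lemma colorful_caratheodory:
  fixes C :: "'i \<Rightarrow> 'a::euclidean_space set"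
  assumes fin: "finite I" and sub: "subspace V" and dimV: "dim V < card I"
    and CI: "\<And>i. i \<in> I \<Longrightarrow> finite (C i) \<and> C i \<subseteq> V \<and> 0 \<in> convex hull (C i)"
  shows "\<exists>f. (\<forall>i\<in>I. f i \<in> C i) \<and> 0 \<in> convex hull (f ` I)"
proof -
  define F where "F = PiE I C"
  have finF: "finite F" unfolding F_def using fin CI by (intro finite_PiE) auto
  have neC: "C i \<noteq> {}" if "i \<in> I" for i using CI[OF that] by auto
  have neF: "F \<noteq> {}" unfolding F_def using neC by (simp add: PiE_eq_empty_iff)
  define d where "d f = norm (closest_point (convex hull (f ` I)) 0)" for f :: "'i \<Rightarrow> 'a"
  obtain f0 where f0F: "f0 \<in> F" and f0min: "\<And>g. g \<in> F \<Longrightarrow> d f0 \<le> d g"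
  proof -
    have "Min (d ` F) \<in> d ` F" using finF neF by (intro Min_in) auto
    then obtain f0 where "f0 \<in> F" "d f0 = Min (d ` F)" by auto
    moreover have "\<And>g. g \<in> F \<Longrightarrow> Min (d ` F) \<le> d g" using finF by auto
    ultimately show ?thesis using that by auto
  qed
  have f0C: "\<forall>i\<in>I. f0 i \<in> C i" using f0F unfolding F_def by auto
  show ?thesis
  proof (rule ccontr)
    assume nex: "\<not> ?thesis"
    define T where "T = f0 ` I"
    define K where "K = convex hull T"
    have finT: "finite T" unfolding T_def using fin by auto
    have neT: "T \<noteq> {}" unfolding T_def using dimV by auto
    have cK: "compact K" "convex K" "K \<noteq> {}" unfolding K_def
      using finT neT by (auto simp: compact_convex_hull finite_imp_compact convex_convex_hull)
    define p where "p = closest_point K 0"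
    have pK: "p \<in> K" unfolding p_def using closest_point_in_set[OF compact_imp_closed[OF cK(1)] cK(3)] .
    have p0: "p \<noteq> 0" using pK nex f0C unfolding K_def T_def by auto
    have pp: "inner p p > 0" using p0 by simp
    have ge: "inner p y \<ge> inner p p" if "y \<in> K" for y
      unfolding p_def using closest_dot_ge[OF cK(2,1,3) that] .
    define H where "H = {x. inner p x = inner p p}"
    define S where "S = T \<inter> H"
    have pS: "p \<in> convex hull S"
    proof -
      obtain u where u: "\<forall>x\<in>T. 0 \<le> u x" "sum u T = 1" "(\<Sum>x\<in>T. u x *\<^sub>R x) = p"
        using pK unfolding K_def convex_hull_finite[OF finT] by auto
      have geT: "inner p x \<ge> inner p p" if "x \<in> T" for x
        using ge that hull_subset[of T convex] unfolding K_def by auto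
      have e1: "(\<Sum>x\<in>T. u x * inner p x) = inner p p"
      proof -
        have "inner p p = inner p (\<Sum>x\<in>T. u x *\<^sub>R x)" using u(3) by simp
        also have "\<dots> = (\<Sum>x\<in>T. u x * inner p x)" by (simp add: inner_sum_right)
        finally show ?thesis by simp
      qed
      have "(\<Sum>x\<in>T. u x * (inner p x - inner p p)) = (\<Sum>x\<in>T. u x * inner p x) - (\<Sum>x\<in>T. u x) * inner p p"
        by (simp add: right_diff_distrib sum_subtractf sum_distrib_right)
      also have "\<dots> = 0" using u(2) e1 by simp
      finally have s0: "(\<Sum>x\<in>T. u x * (inner p x - inner p p)) = 0" .
      have z: "u x * (inner p x - inner p p) = 0" if "x \<in> T" for x
        using sum_nonneg_eq_0_iff[OF finT, of "\<lambda>x. u x * (inner p x - inner p p)"] s0 u(1) geT that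
        by auto
      have uz: "u x = 0" if "x \<in> T" "x \<notin> H" for x
        using z[OF that(1)] that(2) unfolding H_def by auto
      have finS: "finite S" unfolding S_def using finT by auto
      have "sum u S = sum u T"
        unfolding S_def by (rule sum.mono_neutral_left) (use finT uz in auto)
      moreover have "(\<Sum>x\<in>S. u x *\<^sub>R x) = (\<Sum>x\<in>T. u x *\<^sub>R x)"
        unfolding S_def by (rule sum.mono_neutral_left) (use finT uz in auto)
      ultimately show ?thesis unfolding convex_hull_finite[OF finS]
        using u unfolding S_def by auto
    qed
    obtain S' where S': "finite S'" "S' \<subseteq> S" "card S' \<le> aff_dim S + 1" "p \<in> convex hull S'"
      using pS unfolding caratheodory_aff_dim[of S] by auto
    have affH: "affine H" unfolding H_def by (rule affine_hyperplane)
    have "affine hull S \<subseteq> H"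
      by (rule hull_minimal) (use affH in \<open>auto simp: S_def\<close>)
    then have "0 \<notin> affine hull S" using pp unfolding H_def by auto
    then have "aff_dim (insert 0 S) = aff_dim S + 1" by (simp add: aff_dim_insert)
    moreover have "aff_dim (insert 0 S) \<le> aff_dim V"
      apply (rule aff_dim_subset)
      using CI f0C sub subspace_0 unfolding S_def T_def by blast
    moreover have "aff_dim V = int (dim V)" by (rule aff_dim_subspace[OF sub])
    ultimately have cS': "card S' < card I" using S'(3) dimV by linarith
    define J where "J = (\<lambda>s. SOME i. i \<in> I \<and> f0 i = s) ` S'"
    have Jsel: "(SOME i. i \<in> I \<and> f0 i = s) \<in> I \<and> f0 (SOME i. i \<in> I \<and> f0 i = s) = s"
      if "s \<in> S'" for s
    proof (rule someI_ex)
      show "\<exists>i. i \<in> I \<and> f0 i = s" using that S'(2) unfolding S_def T_def by auto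
    qed
    have JI: "J \<subseteq> I" unfolding J_def using Jsel by auto
    have S'J: "S' \<subseteq> f0 ` J" unfolding J_def using Jsel by force
    have "card J \<le> card S'" unfolding J_def by (rule card_image_le[OF S'(1)])
    then have "card J < card I" using cS' by simp
    then obtain i0 where i0: "i0 \<in> I" "i0 \<notin> J" using JI
      by (metis less_irrefl subsetI subset_antisym)
    obtain c where c: "c \<in> C i0" "inner p c \<le> 0"
    proof (rule ccontr)
      assume "\<not> thesis"
      then have "\<forall>c\<in>C i0. inner p c > 0" using that by force
      then have "convex hull (C i0) \<subseteq> {x. inner p x > 0}"
        by (intro hull_minimal) (auto simp: convex_halfspace_gt)
      then show False using CI[OF i0(1)] by auto
    qed
    define f1 where "f1 = f0(i0 := c)"
    have f1F: "f1 \<in> F" using f0F c(1) i0(1) unfolding F_def f1_def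
      by (auto simp: PiE_iff extensional_def)
    define K1 where "K1 = convex hull (f1 ` I)"
    have "S' \<subseteq> f1 ` I" using S'J i0 JI unfolding f1_def by force
    then have pK1: "p \<in> K1" using S'(4) hull_mono unfolding K1_def by blast
    have cK1: "c \<in> K1" unfolding K1_def f1_def using i0(1) hull_subset by fastforce
    have cvK1: "convex K1" "closed K1" unfolding K1_def
      using fin by (auto simp: convex_convex_hull compact_imp_closed compact_convex_hull finite_imp_compact)
    define b where "b = inner (c - p) (c - p)"
    have cp: "c \<noteq> p" using c(2) pp by force
    then have bpos: "b > 0" unfolding b_def by simp
    define t where "t = min 1 (inner p p / b)"
    have t: "0 < t" "t \<le> 1" "t * b \<le> inner p p" unfolding t_def using bpos pp
      by (auto simp: min_def field_simps)
    define q where "q = p + t *\<^sub>R (c - p)"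
    have qK1: "q \<in> K1"
    proof -
      have "q = (1 - t) *\<^sub>R p + t *\<^sub>R c" unfolding q_def by (simp add: algebra_simps)
      then show ?thesis using convexD[OF cvK1(1) pK1 cK1, of "1-t" t] t by auto
    qed
    have "inner q q = inner p p + 2 * t * (inner p c - inner p p) + t * (t * b)"
      unfolding q_def b_def by (simp add: algebra_simps inner_commute power2_eq_square)
    also have "\<dots> < inner p p"
    proof -
      have "inner p c - inner p p \<le> - inner p p" using c(2) by simp
      then have h1: "t * (inner p c - inner p p) \<le> t * (- inner p p)"
        using t(1) by (intro mult_left_mono) auto
      have h2: "t * (t * b) \<le> t * inner p p" using t by (intro mult_left_mono) auto
      have h3: "t * inner p p > 0" using t(1) pp by simp
      have "2 * t * (inner p c - inner p p) = 2 * (t * (inner p c - inner p p))" by simp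
      moreover have "t * (- inner p p) = - (t * inner p p)" by simp
      ultimately show ?thesis using h1 h2 h3 by linarith
    qed
    finally have "norm q < norm p" by (simp add: norm_eq_sqrt_inner)
    moreover have "d f1 \<le> norm q"
      unfolding d_def K1_def[symmetric] using closest_point_le[OF cvK1(2) qK1, of 0]
      by (simp add: dist_0_norm)
    moreover have "d f0 = norm p" unfolding d_def p_def K_def T_def ..
    ultimately show False using f0min[OF f1F] by simp
  qed
qed




lemma convex_hull_image_coeffs:
  fixes f :: "'i \<Rightarrow> 'a::real_vector"
  assumes fin: "finite I" and z: "z \<in> convex hull (f ` I)"
  shows "\<exists>l. (\<forall>i\<in>I. 0 \<le> l i) \<and> sum l I = 1 \<and> (\<Sum>i\<in>I. l i *\<^sub>R f i) = z"
proof -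
  have finS: "finite (f ` I)" using fin by simp
  obtain u where u: "\<forall>x\<in>f ` I. 0 \<le> u x" "sum u (f ` I) = 1" "(\<Sum>x\<in>f ` I. u x *\<^sub>R x) = z"
    using z unfolding convex_hull_finite[OF finS] by auto
  define c where "c s = card {i. i \<in> I \<and> f i = s}" for s
  define l where "l i = u (f i) / c (f i)" for i
  have cpos: "c s > 0" if "s \<in> f ` I" for s
    unfolding c_def using fin that by (auto simp: card_gt_0_iff)
  have inner: "(\<Sum>i\<in>{i. i \<in> I \<and> f i = s}. l i *\<^sub>R h i) = u s *\<^sub>R h' s"
    if "s \<in> f ` I" "\<And>i. i \<in> I \<Longrightarrow> f i = s \<Longrightarrow> h i = h' s" for s and h :: "'i \<Rightarrow> 'a" and h'
  proof -
    have "(\<Sum>i\<in>{i. i \<in> I \<and> f i = s}. l i *\<^sub>R h i) = (\<Sum>i\<in>{i. i \<in> I \<and> f i = s}. (u s / c s) *\<^sub>R h' s)"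
      by (rule sum.cong) (auto simp: l_def that(2))
    also have "\<dots> = (c s * (u s / c s)) *\<^sub>R h' s"
      by (simp add: c_def scaleR_sum_left[symmetric])
    also have "\<dots> = u s *\<^sub>R h' s" using cpos[OF that(1)] by simp
    finally show ?thesis .
  qed
  have "(\<Sum>i\<in>I. l i *\<^sub>R f i) = (\<Sum>s\<in>f ` I. \<Sum>i\<in>{i. i \<in> I \<and> f i = s}. l i *\<^sub>R f i)"
    by (rule sum.image_gen[OF fin])
  also have "\<dots> = (\<Sum>s\<in>f ` I. u s *\<^sub>R s)"
    by (rule sum.cong[OF refl], rule inner) auto
  finally have e1: "(\<Sum>i\<in>I. l i *\<^sub>R f i) = z" using u(3) by simp
  have "sum l I = (\<Sum>s\<in>f ` I. \<Sum>i\<in>{i. i \<in> I \<and> f i = s}. l i)"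
    by (rule sum.image_gen[OF fin])
  also have "\<dots> = (\<Sum>s\<in>f ` I. u s)"
  proof (rule sum.cong[OF refl])
    fix s assume s: "s \<in> f ` I"
    have "(\<Sum>i\<in>{i. i \<in> I \<and> f i = s}. l i) = (\<Sum>i\<in>{i. i \<in> I \<and> f i = s}. u s / c s)"
      by (rule sum.cong) (auto simp: l_def)
    also have "\<dots> = u s" using cpos[OF s] by (simp add: c_def)
    finally show "(\<Sum>i\<in>{i. i \<in> I \<and> f i = s}. l i) = u s" .
  qed
  finally have e2: "sum l I = 1" using u(2) by simp
  have "\<forall>i\<in>I. 0 \<le> l i" using u(1) cpos unfolding l_def by (auto intro!: divide_nonneg_pos)
  then show ?thesis using e1 e2 by blast
qed




lemma tverberg:
  fixes x :: "nat \<Rightarrow> nat \<Rightarrow> real"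
  assumes k1: "k \<ge> 1" and card: "(k - 1) * (m + 1) \<le> CARD('n::finite)"
  defines "N \<equiv> (k - 1) * (m + 1) + 1"
  shows "\<exists>g lam a. (\<forall>i<N. g i < k \<and> lam i \<ge> 0) \<and>
     (\<forall>j<k. (\<Sum>i\<in>{i. i < N \<and> g i = j}. lam i) = 1 \<and>
            (\<forall>r<m. (\<Sum>i\<in>{i. i < N \<and> g i = j}. lam i * x i r) = a r))"
proof -
  define D where "D = (k - 1) * (m + 1)"
  obtain Q :: "'n set" where Q: "card Q = D" "finite Q"
    using obtain_subset_with_card_n[of D "UNIV :: 'n set"] card unfolding D_def by auto
  define PP where "PP = {..m} \<times> {..<k-1}"
  have cPP: "card PP = D" unfolding PP_def D_def by (simp add: card_cartesian_product)
  obtain \<beta> where \<beta>: "bij_betw \<beta> Q PP"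
    using finite_same_card_bij[OF Q(2), of PP] Q cPP unfolding PP_def by auto
  define y where "y i r = (if r < m then x i r else 1)" for i r
  define u where "u j s = (if j = s then 1 else if j = k - 1 then -1 else (0::real))" for j s :: nat
  define T :: "nat \<Rightarrow> nat \<Rightarrow> real^'n" where
    "T i j = (\<chi> q. if q \<in> Q then y i (fst (\<beta> q)) * u j (snd (\<beta> q)) else 0)" for i j
  define C where "C i = T i ` {..<k}" for i
  define V :: "(real^'n) set" where "V = {v. \<forall>q. q \<notin> Q \<longrightarrow> v $ q = 0}"
  define I where "I = {..<N}"
  have subV: "subspace V" unfolding V_def subspace_def by auto
  have dimV: "dim V < card I"
  proof -
    have "V \<subseteq> span ((\<lambda>q. axis q 1) ` Q)"
    proof
      fix v assume v: "v \<in> V"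
      have "v = (\<Sum>q\<in>UNIV. v $ q *\<^sub>R axis q (1::real))"
        using basis_expansion[of v] by (simp add: scalar_mult_eq_scaleR)
      also have "\<dots> = (\<Sum>q\<in>Q. v $ q *\<^sub>R axis q 1)"
        by (rule sum.mono_neutral_right) (use v in \<open>auto simp: V_def\<close>)
      also have "\<dots> \<in> span ((\<lambda>q. axis q 1) ` Q)"
        by (intro span_sum span_scale span_base) auto
      finally show "v \<in> span ((\<lambda>q. axis q 1) ` Q)" .
    qed
    then have "dim V \<le> card ((\<lambda>q. axis q (1::real)) ` Q)"
      using Q(2) by (intro dim_le_card) auto
    also have "\<dots> \<le> card Q" by (rule card_image_le[OF Q(2)])
    finally show ?thesis unfolding I_def N_def D_def Q(1) by simp
  qed
  have CI: "finite (C i) \<and> C i \<subseteq> V \<and> 0 \<in> convex hull (C i)" if "i \<in> I" for i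
  proof (intro conjI)
    show "finite (C i)" unfolding C_def by simp
    show "C i \<subseteq> V" unfolding C_def V_def T_def by auto
    have "(\<Sum>j<k. (1 / real k) *\<^sub>R T i j) \<in> convex hull (C i)"
      by (rule convex_sum) (use k1 in \<open>auto simp: C_def hull_subset[THEN subsetD]\<close>)
    moreover have "(\<Sum>j<k. (1 / real k) *\<^sub>R T i j) = 0"
    proof (subst vec_eq_iff, intro allI)
      fix q
      have us: "(\<Sum>j<k. u j s) = 0" if "s < k - 1" for s
      proof -
        have "(\<Sum>j<k. u j s) = (\<Sum>j<k. (if j = s then 1 else 0) + (if j = k - 1 then -1 else 0))"
          by (rule sum.cong) (use that in \<open>auto simp: u_def\<close>)
        also have "\<dots> = 0" using that k1 by (simp add: sum.distrib)
        finally show ?thesis .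
      qed
      show "(\<Sum>j<k. (1 / real k) *\<^sub>R T i j) $ q = 0 $ q"
      proof (cases "q \<in> Q")
        case True
        then have "\<beta> q \<in> PP" using \<beta> unfolding bij_betw_def by auto
        then have "snd (\<beta> q) < k - 1" unfolding PP_def by auto
        have "(\<Sum>j<k. y i (fst (\<beta> q)) * u j (snd (\<beta> q)) / real k)
            = y i (fst (\<beta> q)) * (\<Sum>j<k. u j (snd (\<beta> q))) / real k"
          by (simp add: sum_distrib_left sum_divide_distrib)
        then show ?thesis using True us[OF \<open>snd (\<beta> q) < k - 1\<close>]
          by (simp add: T_def sum_component)
      qed (simp add: T_def sum_component)
    qed
    ultimately show "0 \<in> convex hull (C i)" by simp
  qed
  obtain f where f: "\<forall>i\<in>I. f i \<in> C i" "0 \<in> convex hull (f ` I)"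
    using colorful_caratheodory[of I V C] I_def subV dimV CI by auto
  obtain l where l: "\<forall>i\<in>I. 0 \<le> l i" "sum l I = 1" "(\<Sum>i\<in>I. l i *\<^sub>R f i) = 0"
    using convex_hull_image_coeffs[of I 0 f] f(2) I_def by auto
  define g where "g i = (SOME j. j < k \<and> f i = T i j)" for i
  have g: "g i < k \<and> f i = T i (g i)" if "i \<in> I" for i
    unfolding g_def by (rule someI_ex) (use f(1) that in \<open>auto simp: C_def\<close>)
  define W where "W j r = (\<Sum>i\<in>{i. i \<in> I \<and> g i = j}. l i * y i r)" for j r
  have sumT: "(\<Sum>i\<in>I. l i *\<^sub>R T i (g i)) = 0" using l(3) g by simp
  have Weq: "W s r = W (k - 1) r" if "r \<le> m" "s < k - 1" for r s
  proof -
    have rs: "(r, s) \<in> PP" unfolding PP_def using that by auto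
    define q where "q = inv_into Q \<beta> (r, s)"
    have q: "q \<in> Q" "\<beta> q = (r, s)" unfolding q_def using \<beta> rs
      by (auto simp: bij_betw_def inv_into_into f_inv_into_f)
    have "0 = (\<Sum>i\<in>I. l i *\<^sub>R T i (g i)) $ q" using sumT by simp
    also have "\<dots> = (\<Sum>i\<in>I. l i * y i r * u (g i) s)"
      using q by (simp add: T_def sum_component mult.assoc)
    also have "\<dots> = (\<Sum>j<k. \<Sum>i\<in>{i. i \<in> I \<and> g i = j}. l i * y i r * u (g i) s)"
      by (rule sum.group[symmetric]) (use g I_def in auto)
    also have "\<dots> = (\<Sum>j<k. u j s * W j r)"
      unfolding W_def by (rule sum.cong[OF refl]) (auto simp: sum_distrib_left intro!: sum.cong)
    also have "\<dots> = (\<Sum>j<k. (if j = s then W j r else 0) + (if j = k - 1 then - W j r else 0))"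
      by (rule sum.cong) (use that in \<open>auto simp: u_def\<close>)
    also have "\<dots> = W s r - W (k - 1) r" using that k1 by (simp add: sum.distrib)
    finally show ?thesis by simp
  qed
  have Wall: "W j r = W (k - 1) r" if "r \<le> m" "j < k" for r j
    using Weq[OF that(1), of j] that(2) by (cases "j = k - 1") auto
  have "(\<Sum>j<k. W j m) = sum l I"
  proof -
    have "(\<Sum>j<k. W j m) = (\<Sum>j<k. \<Sum>i\<in>{i. i \<in> I \<and> g i = j}. l i)"
      unfolding W_def y_def by simp
    also have "\<dots> = sum l I" by (rule sum.group) (use g I_def in auto)
    finally show ?thesis .
  qed
  then have "(\<Sum>j<k. W j m) = 1" using l(2) by simp
  moreover have "(\<Sum>j<k. W j m) = (\<Sum>j<k. W (k - 1) m)"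
    by (rule sum.cong[OF refl], rule Wall) auto
  moreover have "(\<Sum>j<k. W (k - 1) m) = real k * W (k - 1) m" by simp
  ultimately have kW: "real k * W (k - 1) m = 1" by simp
  define lam where "lam i = real k * l i" for i
  define a where "a r = real k * W (k - 1) r" for r
  show ?thesis
  proof (intro exI conjI allI impI)
    fix i assume "i < N" then show "g i < k" "lam i \<ge> 0"
      using g l(1) unfolding lam_def I_def by auto
  next
    fix j assume j: "j < k"
    have "(\<Sum>i\<in>{i. i < N \<and> g i = j}. lam i) = real k * W j m"
      unfolding lam_def W_def y_def I_def by (simp add: sum_distrib_left)
    also have "\<dots> = 1" using Wall[of m j] j kW by simp
    finally show "(\<Sum>i\<in>{i. i < N \<and> g i = j}. lam i) = 1" .
    fix r assume r: "r < m"
    have "(\<Sum>i\<in>{i. i < N \<and> g i = j}. lam i * x i r) = real k * W j r"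
      unfolding lam_def W_def y_def I_def using r by (simp add: sum_distrib_left mult.assoc)
    also have "\<dots> = a r" using Wall[of r j] j r unfolding a_def by simp
    finally show "(\<Sum>i\<in>{i. i < N \<and> g i = j}. lam i * x i r) = a r" .
  qed
qed




definition cinner :: "complex^'n \<Rightarrow> complex^'n \<Rightarrow> complex" where
  "cinner x y = (\<Sum>i\<in>UNIV. cnj (x $ i) * y $ i)"

lemma cinner_zero_right[simp]: "cinner x 0 = 0" unfolding cinner_def by simp
lemma cinner_zero_left[simp]: "cinner 0 x = 0" unfolding cinner_def by simp
lemma cinner_add_right: "cinner x (y + z) = cinner x y + cinner x z"
  by (simp add: cinner_def distrib_left sum.distrib)
lemma cinner_add_left: "cinner (x + y) z = cinner x z + cinner y z"
  by (simp add: cinner_def distrib_right sum.distrib)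
lemma cinner_diff_right: "cinner x (y - z) = cinner x y - cinner x z"
  by (simp add: cinner_def right_diff_distrib sum_subtractf)
lemma cinner_scale_right: "cinner x (c *s y) = c * cinner x y"
  by (simp add: cinner_def sum_distrib_left mult.left_commute)
lemma cinner_scale_left: "cinner (c *s x) y = cnj c * cinner x y"
  by (simp add: cinner_def sum_distrib_left mult.assoc)
lemma cinner_sum_right: "cinner x (\<Sum>i\<in>S. f i) = (\<Sum>i\<in>S. cinner x (f i))"
  by (induction S rule: infinite_finite_induct) (auto simp: cinner_add_right)
lemma cinner_sum_left: "cinner (\<Sum>i\<in>S. f i) y = (\<Sum>i\<in>S. cinner (f i) y)"
  by (induction S rule: infinite_finite_induct) (auto simp: cinner_add_left)
lemma cinner_commute: "cinner y x = cnj (cinner x y)"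
  by (simp add: cinner_def mult.commute)

lemma re_cinner: "Re (cinner x y) = inner x y"
  by (simp add: cinner_def inner_vec_def inner_complex_def Re_sum)

lemma im_cinner: "Im (cinner x y) = inner (\<i> *s x) y"
  by (simp add: cinner_def inner_vec_def inner_complex_def Im_sum)

lemma cinner_self: "cinner x x = of_real (inner x x)"
proof -
  have "Im (cinner x x) = 0"
    using cinner_commute[of x x] by (metis cnj.simps(2) neg_equal_zero)
  then show ?thesis using re_cinner[of x x] by (simp add: complex_eq_iff)
qed

lemma self_adjoint_entry: "self_adjoint A \<Longrightarrow> cnj (A $ j $ i) = A $ i $ j"
  unfolding self_adjoint_def cmat_adjoint_def by (metis vec_lambda_beta)

lemma self_adjoint_cinner:
  assumes "self_adjoint A"
  shows "cinner x (A *v y) = cinner (A *v x) y"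
proof -
  have "cinner x (A *v y) = (\<Sum>i\<in>UNIV. \<Sum>j\<in>UNIV. cnj (x $ i) * A $ i $ j * y $ j)"
    by (simp add: cinner_def matrix_vector_mult_def sum_distrib_left mult.assoc)
  also have "\<dots> = (\<Sum>j\<in>UNIV. \<Sum>i\<in>UNIV. cnj (x $ i) * A $ i $ j * y $ j)"
    by (rule sum.swap)
  also have "\<dots> = cinner (A *v x) y"
    unfolding cinner_def matrix_vector_mult_def
    by (simp add: sum_distrib_right sum_distrib_left self_adjoint_entry[OF assms] mult.commute mult.left_commute)
  finally show ?thesis .
qed

lemma self_adjoint_inner:
  assumes "self_adjoint A"
  shows "inner x (A *v y) = inner (A *v x) y"
  using self_adjoint_cinner[OF assms] re_cinner by metis

lemma matrix_vector_scaleR: "(A::complex^'n^'m) *v (c *\<^sub>R x) = c *\<^sub>R (A *v x)"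
  by (simp add: vec_eq_iff matrix_vector_mult_def scaleR_sum_right)

lemma of_real_smult: "complex_of_real c *s (x::complex^'n) = c *\<^sub>R x"
proof (rule vec_eq_iff[THEN iffD2], rule allI)
  fix i
  show "(complex_of_real c *s x) $ i = (c *\<^sub>R x) $ i"
    by (simp only: vector_smult_component vector_scaleR_component) (simp add: scaleR_conv_of_real)
qed

lemma orth_exists:
  fixes U :: "(complex^'n) set"
  assumes "finite U" "card U < CARD('n)"
  shows "\<exists>z. norm z = 1 \<and> (\<forall>u\<in>U. cinner u z = 0)"
proof -
  define U' where "U' = U \<union> (\<lambda>u. \<i> *s u) ` U"
  have "dim U' \<le> card U'" using assms(1) unfolding U'_def
    by (intro dim_le_card') auto
  also have "\<dots> \<le> card U + card ((\<lambda>u. \<i> *s u) ` U)" unfolding U'_def by (rule card_Un_le)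
  also have "\<dots> \<le> 2 * card U" using card_image_le[OF assms(1), of "\<lambda>u. \<i> *s u"] by simp
  also have "\<dots> < DIM(complex^'n)" using assms(2) by simp
  finally obtain z where z: "z \<noteq> 0" "\<And>y. y \<in> span U' \<Longrightarrow> orthogonal z y"
    using orthogonal_to_subspace_exists by blast
  have o: "inner y z = 0" if "y \<in> U'" for y
    using z(2)[OF span_base[OF that]] by (simp add: orthogonal_def inner_commute)
  define w where "w = complex_of_real (1 / norm z) *s z"
  have "norm w = 1" unfolding w_def of_real_smult using z(1) by simp
  moreover have "cinner u w = 0" if "u \<in> U" for u
  proof -
    have "Re (cinner u z) = 0" "Im (cinner u z) = 0"
      using o[of u] o[of "\<i> *s u"] that unfolding U'_def by (auto simp: re_cinner im_cinner)
    then have "cinner u z = 0" by (simp add: complex_eq_iff)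
    then show ?thesis unfolding w_def by (simp add: cinner_scale_right)
  qed
  ultimately show ?thesis by blast
qed


lemma matvec_linear: "linear (\<lambda>x::complex^'n. (A::complex^'n^'m) *v x)"
  by (rule linearI) (simp_all add: matrix_vector_right_distrib matrix_vector_scaleR)

lemma quad_nonpos_zero:
  fixes s c :: real
  assumes s: "s \<ge> 0" and h: "\<And>t. t > 0 \<Longrightarrow> 2 * s + t * c \<le> 0"
  shows "s = 0"
proof (rule ccontr)
  assume "s \<noteq> 0" then have sp: "s > 0" using s by simp
  define t where "t = s / (\<bar>c\<bar> + 1)"
  have tp: "t > 0" unfolding t_def using sp by simp
  have "t * \<bar>c\<bar> = s * (\<bar>c\<bar> / (\<bar>c\<bar> + 1))" unfolding t_def by simp
  moreover have "\<bar>c\<bar> / (\<bar>c\<bar> + 1) \<le> 1" by simp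
  ultimately have "t * \<bar>c\<bar> \<le> s" using sp
    by (metis mult.right_neutral mult_left_mono less_imp_le)
  moreover have "t * (- \<bar>c\<bar>) \<le> t * c" using tp by (intro mult_left_mono) auto
  ultimately have "2 * s + t * c > 0" using sp by linarith
  then show False using h[OF tp] by simp
qed

lemma eigvec_exists:
  fixes A :: "complex^'n^'n"
  assumes sa: "self_adjoint A"
  shows "\<exists>z c. norm z = 1 \<and> A *v z = c *s z"
proof -
  define f where "f x = inner x (A *v x)" for x :: "complex^'n"
  have cont: "continuous_on (sphere 0 1) f"
  proof -
    have "continuous_on UNIV (\<lambda>x::complex^'n. A *v x)"
      using matvec_linear[of A] by (simp add: linear_continuous_on linear_conv_bounded_linear)
    then show ?thesis unfolding f_def
      by (intro continuous_intros)
  qed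
  have ne: "sphere (0::complex^'n) 1 \<noteq> {}" by simp
  obtain x0 where x0: "x0 \<in> sphere 0 1" and mx: "\<And>y. y \<in> sphere 0 1 \<Longrightarrow> f y \<le> f x0"
    using continuous_attains_sup[OF compact_sphere ne cont] by blast
  define l where "l = f x0"
  have n1: "norm x0 = 1" using x0 by simp
  have x0x0: "inner x0 x0 = 1" using n1 by (simp add: power2_norm_eq_inner[symmetric])
  have fscale: "f (c *\<^sub>R v) = c * c * f v" for c v
    unfolding f_def by (simp add: matrix_vector_scaleR)
  have bound: "f v \<le> l * inner v v" for v
  proof (cases "v = 0")
    case True then show ?thesis by (simp add: f_def)
  next
    case False
    define v' where "v' = (1 / norm v) *\<^sub>R v"
    have "v' \<in> sphere 0 1" unfolding v'_def using False by simp
    then have "f v' \<le> l" unfolding l_def by (rule mx)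
    then have "f v / (norm v * norm v) \<le> l" unfolding v'_def fscale by simp
    then have "f v \<le> l * (norm v * norm v)" using False by (simp add: field_simps)
    then show ?thesis by (simp add: power2_norm_eq_inner[symmetric] power2_eq_square)
  qed
  define w where "w = A *v x0 - l *\<^sub>R x0"
  define s where "s = inner w w"
  define c where "c = f w - l * s"
  have sym: "inner x0 (A *v w) = inner w (A *v x0)"
    using self_adjoint_inner[OF sa, of x0 w] by (simp add: inner_commute)
  define p where "p = inner w (A *v x0)"
  define q where "q = inner w x0"
  have E: "s = p - l * q"
  proof -
    have "inner w w = inner w (A *v x0 - l *\<^sub>R x0)" by (metis w_def)
    also have "\<dots> = inner w (A *v x0) - l * inner w x0"
      by (simp only: inner_diff_right inner_scaleR_right)
    finally show ?thesis unfolding s_def p_def q_def .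
  qed
  have key: "2 * s + t * c \<le> 0" if tp: "t > 0" for t
  proof -
    have "f (x0 + t *\<^sub>R w) \<le> l * inner (x0 + t *\<^sub>R w) (x0 + t *\<^sub>R w)" by (rule bound)
    moreover have "f (x0 + t *\<^sub>R w) = l + (2 * t * p + t * t * f w)"
    proof -
      have "f (x0 + t *\<^sub>R w) = inner (x0 + t *\<^sub>R w) (A *v x0 + t *\<^sub>R (A *v w))"
        unfolding f_def by (simp only: matrix_vector_right_distrib matrix_vector_scaleR)
      also have "\<dots> = inner x0 (A *v x0) + t * inner x0 (A *v w) + t * inner w (A *v x0)
          + t * (t * inner w (A *v w))"
        by (simp only: inner_add_left inner_add_right inner_scaleR_left inner_scaleR_right) (simp add: algebra_simps)
      finally show ?thesis unfolding f_def l_def p_def sym by simp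
    qed
    moreover have "inner (x0 + t *\<^sub>R w) (x0 + t *\<^sub>R w) = 1 + (2 * t * q + t * t * s)"
    proof -
      have "inner (x0 + t *\<^sub>R w) (x0 + t *\<^sub>R w) = inner x0 x0 + t * inner x0 w + t * inner w x0 + t * (t * inner w w)"
        by (simp only: inner_add_left inner_add_right inner_scaleR_left inner_scaleR_right) (simp add: algebra_simps)
      then show ?thesis unfolding s_def q_def using x0x0 inner_commute[of x0 w] by simp
    qed
    ultimately have B: "l + (2 * t * p + t * t * f w) \<le> l + l * (2 * t * q + t * t * s)"
      by (simp add: distrib_left)
    have "t * (2 * s + t * c) = (2 * t * p + t * t * f w) - l * (2 * t * q + t * t * s)"
      unfolding c_def E by (simp add: algebra_simps)
    then have "t * (2 * s + t * c) \<le> 0" using B by linarith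
    then show ?thesis using tp by (simp add: mult_le_0_iff)
  qed
  have "s = 0" by (rule quad_nonpos_zero[OF _ key]) (simp add: s_def)
  then have "w = 0" unfolding s_def by simp
  then have "A *v x0 = complex_of_real l *s x0" unfolding w_def of_real_smult by simp
  then show ?thesis using n1 by blast
qed




definition outer :: "complex^'n \<Rightarrow> complex^'n \<Rightarrow> complex^'n^'n" where
  "outer x y = (\<chi> i j. x $ i * cnj (y $ j))"

lemma outer_entry[simp]: "outer x y $ i $ j = x $ i * cnj (y $ j)"
  by (simp add: outer_def)

lemma outer_outer: "outer a b ** outer c d = outer (cinner b c *s a) d"
  by (simp add: vec_eq_iff matrix_matrix_mult_def cinner_def sum_distrib_left sum_distrib_right
      mult.commute mult.left_commute)

lemma outer_mat:
  assumes "self_adjoint B"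
  shows "outer a b ** B = outer a (B *v b)"
  by (simp add: vec_eq_iff matrix_matrix_mult_def matrix_vector_mult_def sum_distrib_left
      self_adjoint_entry[OF assms] mult.commute mult.left_commute)

lemma sum_matmul_left:
  fixes M :: "'p \<Rightarrow> complex^'n^'n"
  shows "(\<Sum>p\<in>S. M p) ** N = (\<Sum>p\<in>S. M p ** N)"
  unfolding vec_eq_iff matrix_matrix_mult_def
  by (simp add: sum_distrib_right sum_component) (intro allI, rule sum.swap)

lemma sum_matmul_right:
  fixes M :: "'p \<Rightarrow> complex^'n^'n"
  shows "N ** (\<Sum>p\<in>S. M p) = (\<Sum>p\<in>S. N ** M p)"
  unfolding vec_eq_iff matrix_matrix_mult_def
  by (simp add: sum_distrib_left sum_component) (intro allI, rule sum.swap)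

lemma matvec_sum: "(B::complex^'n^'n) *v (\<Sum>p\<in>S. f p) = (\<Sum>p\<in>S. B *v f p)"
  unfolding vec_eq_iff matrix_vector_mult_def
  by (simp add: sum_distrib_left sum_component) (intro allI, rule sum.swap)

lemma matvec_smult: "(B::complex^'n^'n) *v (c *s x) = c *s (B *v x)"
  by (simp add: vec_eq_iff matrix_vector_mult_def sum_distrib_left mult.left_commute)

lemma outer_zero_left[simp]: "outer 0 y = 0"
  by (simp add: vec_eq_iff)

lemma outer_one_left[simp]: "outer (1 *s x) y = outer x y"
  by (simp add: vec_eq_iff)

lemma outer_real_left: "outer (complex_of_real c *s x) y = c *\<^sub>R outer x y"
proof (rule vec_eq_iff[THEN iffD2], intro allI, rule vec_eq_iff[THEN iffD2], intro allI)
  fix i j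
  show "outer (complex_of_real c *s x) y $ i $ j = (c *\<^sub>R outer x y) $ i $ j"
  proof -
    have "(c *\<^sub>R outer x y) $ i $ j = c *\<^sub>R (x $ i * cnj (y $ j))"
      by (simp only: vector_scaleR_component outer_entry)
    also have "\<dots> = complex_of_real c * (x $ i * cnj (y $ j))"
      by (rule scaleR_conv_of_real)
    finally show ?thesis by (simp only: outer_entry vector_smult_component mult.assoc)
  qed
qed




lemma zseq:
  fixes As :: "(complex^'n^'n) list"
  assumes sa: "\<forall>A\<in>set As. self_adjoint A" and len: "length As = m" and m1: "m \<ge> 1"
    and N1: "N \<ge> 1" and card: "(N - 1) * (m + 1) \<le> CARD('n)"
  shows "\<exists>z. (\<forall>i<N. norm (z i) = 1) \<and>
     (\<forall>i<N. \<forall>l<i. cinner (z l) (z i) = 0 \<and> (\<forall>r<m. cinner (As ! r *v z l) (z i) = 0))"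
proof -
  have sa0: "self_adjoint (As ! 0)" using sa len m1 by (auto simp: nth_mem)
  obtain z0 c0 where z0: "norm z0 = 1" "As ! 0 *v z0 = c0 *s z0"
    using eigvec_exists[OF sa0] by blast
  define Inv where "Inv M z \<longleftrightarrow> (\<forall>i<M. norm (z i) = 1) \<and>
     (\<forall>i<M. \<forall>l<i. cinner (z l) (z i) = 0 \<and> (\<forall>r<m. cinner (As ! r *v z l) (z i) = 0)) \<and> z 0 = z0"
    for M and z :: "nat \<Rightarrow> complex^'n"
  have "M \<le> N \<Longrightarrow> 1 \<le> M \<Longrightarrow> \<exists>z. Inv M z" for M
  proof (induction M)
    case 0 then show ?case by simp
  next
    case (Suc M)
    show ?case
    proof (cases "M = 0")
      case True
      then show ?thesis using z0 unfolding Inv_def by (intro exI[of _ "\<lambda>_. z0"]) auto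
    next
      case False
      then obtain z where z: "Inv M z" using Suc by auto
      define PI where "PI = {..<M} \<times> {..<m} - {(0, 0)}"
      define U where "U = z ` {..<M} \<union> (\<lambda>(l, r). As ! r *v z l) ` PI"
      have cPI: "card PI = M * m - 1" unfolding PI_def using False m1
        by (subst card_Diff_singleton) (auto simp: card_cartesian_product)
      have "card U \<le> card (z ` {..<M}) + card ((\<lambda>(l, r). As ! r *v z l) ` PI)"
        unfolding U_def by (rule card_Un_le)
      also have "\<dots> \<le> M + (M * m - 1)"
        using card_image_le[of "{..<M}" z] card_image_le[of PI "\<lambda>(l, r). As ! r *v z l"] cPI
        unfolding PI_def by (intro add_mono) auto
      also have "\<dots> < M * (m + 1)" using False m1 by (simp add: algebra_simps)
      also have "\<dots> \<le> (N - 1) * (m + 1)" using Suc.prems by (intro mult_right_mono) auto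
      also have "\<dots> \<le> CARD('n)" by (rule card)
      finally have cU: "card U < CARD('n)" .
      have fU: "finite U" unfolding U_def PI_def by auto
      obtain w where w: "norm w = 1" "\<And>u. u \<in> U \<Longrightarrow> cinner u w = 0"
        using orth_exists[OF fU cU] by blast
      define z' where "z' = z(M := w)"
      have "Inv (Suc M) z'"
        unfolding Inv_def
      proof (intro conjI allI impI)
        fix i assume "i < Suc M"
        then show "norm (z' i) = 1" using z w(1) unfolding z'_def Inv_def
          by (cases "i = M") auto
      next
        fix i l assume il: "i < Suc M" "l < i"
        show "cinner (z' l) (z' i) = 0"
        proof (cases "i = M")
          case True
          then show ?thesis using il w(2)[of "z l"] unfolding z'_def U_def by auto
        next
          case False
          then show ?thesis using il z unfolding z'_def Inv_def by auto
        qed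
      next
        fix i l r assume il: "i < Suc M" "l < i" and r: "r < m"
        show "cinner (As ! r *v z' l) (z' i) = 0"
        proof (cases "i = M")
          case True
          show ?thesis
          proof (cases "(l, r) = (0, 0)")
            case True
            then have "As ! r *v z' l = c0 *s z' l" using z0 z \<open>l < i\<close> \<open>i = M\<close>
              unfolding z'_def Inv_def by auto
            then show ?thesis using True w(2)[of "z l"] il \<open>i = M\<close>
              unfolding z'_def U_def by (auto simp: cinner_scale_left)
          next
            case False
            then have "(l, r) \<in> PI" unfolding PI_def using il r \<open>i = M\<close> by auto
            then have "As ! r *v z l \<in> U" unfolding U_def by force
            then show ?thesis using w(2) il \<open>i = M\<close> unfolding z'_def by auto
          qed
        next
          case False
          then show ?thesis using il r z unfolding z'_def Inv_def by auto
        qed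
      next
        show "z' 0 = z0" using z False unfolding z'_def Inv_def by auto
      qed
      then show ?thesis by blast
    qed
  qed
  then obtain z where "Inv N z" using N1 by blast
  then show ?thesis unfolding Inv_def by blast
qed




lemma diag_sum:
  assumes "finite S1" "finite S2" "\<And>i l. i \<in> S1 \<Longrightarrow> l \<in> S2 \<Longrightarrow> F i l = (if i = l then d i else 0)"
  shows "(\<Sum>i\<in>S1. \<Sum>l\<in>S2. F i l) = (\<Sum>i\<in>S1 \<inter> S2. d i)"
proof -
  have "(\<Sum>i\<in>S1. \<Sum>l\<in>S2. F i l) = (\<Sum>i\<in>S1. \<Sum>l\<in>S2. if i = l then d i else 0)"
    using assms(3) by (intro sum.cong) auto
  also have "\<dots> = (\<Sum>i\<in>S1. if i \<in> S2 then d i else 0)"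
    using assms(2) by (intro sum.cong) (auto simp: sum.delta)
  also have "\<dots> = (\<Sum>i\<in>S1 \<inter> S2. d i)"
    using assms(1) by (simp add: sum.inter_restrict)
  finally show ?thesis .
qed

lemma self_adjoint_mat1: "self_adjoint (mat 1 :: complex^'n^'n)"
  unfolding self_adjoint_def cmat_adjoint_def by (simp add: vec_eq_iff mat_def)

lemma proj_self_adjoint:
  "self_adjoint (\<Sum>p\<in>S. outer (xs p) (xs p))"
  unfolding self_adjoint_def cmat_adjoint_def
  by (simp add: vec_eq_iff sum_component mult.commute)

lemma proj_sandwich:
  fixes xs :: "nat \<Rightarrow> complex^'n"
  assumes sa: "self_adjoint B"
    and h: "\<And>p q. p < k \<Longrightarrow> q < k \<Longrightarrow> cinner (xs p) (B *v xs q) = (if p = q then complex_of_real c else 0)"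
  defines "P \<equiv> (\<Sum>p<k. outer (xs p) (xs p))"
  shows "P ** B ** P = c *\<^sub>R P"
proof -
  have "P ** B = (\<Sum>p<k. outer (xs p) (B *v xs p))"
    unfolding P_def sum_matmul_left outer_mat[OF sa] ..
  then have "P ** B ** P = (\<Sum>p<k. outer (xs p) (B *v xs p) ** P)"
    by (simp only: sum_matmul_left)
  also have "\<dots> = (\<Sum>p<k. \<Sum>q<k. outer (xs p) (B *v xs p) ** outer (xs q) (xs q))"
    unfolding P_def by (simp only: sum_matmul_right)
  also have "\<dots> = (\<Sum>p<k. \<Sum>q<k. if q = p then c *\<^sub>R outer (xs p) (xs p) else 0)"
  proof (intro sum.cong refl)
    fix p q assume pq: "p \<in> {..<k}" "q \<in> {..<k}"
    have "cinner (B *v xs p) (xs q) = (if p = q then complex_of_real c else 0)"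
      using h[of p q] pq self_adjoint_cinner[OF sa, of "xs p" "xs q"] by simp
    then show "outer (xs p) (B *v xs p) ** outer (xs q) (xs q) = (if q = p then c *\<^sub>R outer (xs p) (xs p) else 0)"
      by (auto simp: outer_outer outer_real_left)
  qed
  also have "\<dots> = (\<Sum>p<k. c *\<^sub>R outer (xs p) (xs p))"
    by (simp add: sum.delta)
  also have "\<dots> = c *\<^sub>R P" unfolding P_def by (simp add: scaleR_sum_right)
  finally show ?thesis .
qed


definition cv :: "complex^'n \<Rightarrow> complex^'n" where "cv v = (\<chi> j. cnj (v $ j))"

lemma proj_rank:
  fixes xs :: "nat \<Rightarrow> complex^'n"
  assumes ON: "\<And>p q. p < k \<Longrightarrow> q < k \<Longrightarrow> cinner (xs p) (xs q) = (if p = q then 1 else 0)"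
  defines "P \<equiv> (\<Sum>p<k. outer (xs p) (xs p))"
  shows "rank P = k"
proof -
  define Y where "Y = (\<lambda>p. cv (xs p)) ` {..<k}"
  have rowP: "row i P = (\<Sum>p<k. (xs p $ i) *s cv (xs p))" for i
    unfolding P_def cv_def row_def by (simp add: vec_eq_iff sum_component)
  have rowsY: "rows P \<subseteq> vec.span Y"
  proof
    fix v assume "v \<in> rows P"
    then obtain i where vi: "v = row i P" unfolding rows_def by auto
    have "row i P \<in> vec.span Y" unfolding rowP Y_def
      by (rule vec.span_sum, rule vec.span_scale, rule vec.span_base) auto
    then show "v \<in> vec.span Y" using vi by simp
  qed
  have Yrows: "Y \<subseteq> vec.span (rows P)"
  proof
    fix v assume "v \<in> Y"
    then obtain q where q: "q < k" "v = cv (xs q)" unfolding Y_def by auto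
    have "(\<Sum>i\<in>UNIV. cnj (xs q $ i) *s row i P) = cv (xs q)"
    proof (subst vec_eq_iff, intro allI)
      fix j
      have "(\<Sum>i\<in>UNIV. cnj (xs q $ i) *s row i P) $ j
          = (\<Sum>i\<in>UNIV. \<Sum>p<k. cnj (xs q $ i) * (xs p $ i * cnj (xs p $ j)))"
        unfolding P_def row_def by (simp add: sum_component sum_distrib_left)
      also have "\<dots> = (\<Sum>p<k. \<Sum>i\<in>UNIV. cnj (xs q $ i) * xs p $ i * cnj (xs p $ j))"
        by (subst sum.swap) (simp add: mult.assoc)
      also have "\<dots> = (\<Sum>p<k. cinner (xs q) (xs p) * cnj (xs p $ j))"
        unfolding cinner_def by (simp add: sum_distrib_right)
      also have "\<dots> = (\<Sum>p<k. if q = p then cnj (xs p $ j) else 0)"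
        using ON q(1) by (intro sum.cong) auto
      also have "\<dots> = cv (xs q) $ j" using q(1) by (simp add: cv_def)
      finally show "(\<Sum>i\<in>UNIV. cnj (xs q $ i) *s row i P) $ j = cv (xs q) $ j" .
    qed
    moreover have "(\<Sum>i\<in>UNIV. cnj (xs q $ i) *s row i P) \<in> vec.span (rows P)"
      by (rule vec.span_sum, rule vec.span_scale, rule vec.span_base) (auto simp: rows_def)
    ultimately show "v \<in> vec.span (rows P)" using q by simp
  qed
  have cvinj: "cv a = cv b \<Longrightarrow> a = b" for a b
    unfolding cv_def by (simp add: vec_eq_iff)
  have injY: "inj_on (\<lambda>p. cv (xs p)) {..<k}"
  proof (rule inj_onI)
    fix p q assume pq: "p \<in> {..<k}" "q \<in> {..<k}" "cv (xs p) = cv (xs q)"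
    have "xs p = xs q" by (rule cvinj[OF pq(3)])
    then have "cinner (xs p) (xs q) = 1" using ON[of p p] pq by simp
    then show "p = q" using ON[of p q] pq by (auto split: if_splits)
  qed
  have cardY: "card Y = k" unfolding Y_def using card_image[OF injY] by simp
  have phi: "(\<Sum>j\<in>UNIV. cv (xs p) $ j * xs q $ j) = (if p = q then 1 else 0)"
    if "p < k" "q < k" for p q
    using ON[OF that] unfolding cinner_def cv_def by simp
  have indY: "vec.independent Y"
    unfolding vec.independent_explicit
  proof (intro conjI allI impI ballI)
    show "finite Y" unfolding Y_def by simp
    fix c v assume c: "(\<Sum>v\<in>Y. c v *s v) = 0" and v: "v \<in> Y"
    then obtain q where q: "q < k" "v = cv (xs q)" unfolding Y_def by auto
    define \<phi> where "\<phi> u = (\<Sum>j\<in>UNIV. u $ j * xs q $ j)" for u :: "complex^'n"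
    have \<phi>sum: "\<phi> (\<Sum>v\<in>Y. c v *s v) = (\<Sum>v\<in>Y. c v * \<phi> v)"
      unfolding \<phi>_def by (simp add: sum_component sum_distrib_left sum_distrib_right mult.assoc)
        (rule sum.swap)
    have "\<phi> v' = (if v' = v then 1 else 0)" if "v' \<in> Y" for v'
    proof -
      obtain p where p: "p < k" "v' = cv (xs p)" using \<open>v' \<in> Y\<close> unfolding Y_def by auto
      have "v' = v \<longleftrightarrow> p = q" using injY p q unfolding inj_on_def by auto
      then show ?thesis using phi[OF p(1) q(1)] p unfolding \<phi>_def by simp
    qed
    then have "(\<Sum>v\<in>Y. c v * \<phi> v) = (\<Sum>v'\<in>Y. if v' = v then c v' else 0)"
      by (intro sum.cong) auto
    also have "\<dots> = c v" using v unfolding Y_def by (simp add: sum.delta')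
    finally show "c v = 0" using \<phi>sum c unfolding \<phi>_def by simp
  qed
  have "rank P = vec.dim (rows P)" by (simp add: row_rank_def_gen)
  also have "\<dots> = vec.dim (vec.span (rows P))" by simp
  also have "\<dots> = card Y"
    by (rule vec.basis_card_eq_dim[symmetric])
       (use Yrows indY vec.span_minimal[OF rowsY vec.subspace_span] in auto)
  finally show ?thesis using cardY by simp
qed




lemma real_cinner_self_adj:
  assumes "self_adjoint A"
  shows "cinner z (A *v z) = complex_of_real (Re (cinner z (A *v z)))"
proof -
  have "cinner z (A *v z) = cnj (cinner z (A *v z))"
    using self_adjoint_cinner[OF assms, of z z] cinner_commute[of "A *v z" z] by simp
  then have "Im (cinner z (A *v z)) = 0" by (metis cnj.simps(2) neg_equal_zero)
  then show ?thesis by (simp add: complex_eq_iff)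
qed

theorem proposition2p4:
  fixes As :: "(complex^'n^'n) list" and m k :: nat
  assumes "length As = m" and "m \<ge> 1" and "k > 1"
    and "\<forall>A \<in> set As. self_adjoint A"
    and "CARD('n) \<ge> (k - 1) * (m + 1)^2"
  shows "joint_rank_k_numrange k As \<noteq> {}"
proof -
  define N where "N = (k - 1) * (m + 1) + 1"
  have "N - 1 = (k - 1) * (m + 1)" unfolding N_def by simp
  then have "(N - 1) * (m + 1) = (k - 1) * (m + 1)^2"
    by (simp only: power2_eq_square mult.assoc)
  then have c1: "(N - 1) * (m + 1) \<le> CARD('n)" using assms(5) by simp
  have c2: "(k - 1) * (m + 1) \<le> CARD('n)"
  proof -
    have "(k - 1) * (m + 1) \<le> (k - 1) * (m + 1) * (m + 1)" by simp
    then show ?thesis using c1 unfolding N_def by simp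
  qed
  have sa: "self_adjoint (As ! r)" if "r < m" for r
    using assms(1,4) that by (auto simp: nth_mem)
  obtain z where zn: "\<forall>i<N. norm (z i) = 1"
    and zo: "\<forall>i<N. \<forall>l<i. cinner (z l) (z i) = 0 \<and> (\<forall>r<m. cinner (As ! r *v z l) (z i) = 0)"
    using zseq[OF assms(4,1,2), of N] c1 unfolding N_def by auto
  define x where "x i r = Re (cinner (z i) (As ! r *v z i))" for i r
  obtain g lam a where gl: "\<forall>i<N. g i < k \<and> lam i \<ge> 0"
    and gs: "\<forall>j<k. (\<Sum>i\<in>{i. i < N \<and> g i = j}. lam i) = 1 \<and>
            (\<forall>r<m. (\<Sum>i\<in>{i. i < N \<and> g i = j}. lam i * x i r) = a r)"
    using tverberg[OF _ c2, of x] assms(3) unfolding N_def by auto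
  have ON: "cinner (z i) (z l) = (if i = l then 1 else 0)" if "i < N" "l < N" for i l
  proof (cases "i = l")
    case True
    have "inner (z i) (z i) = 1" using zn that(1) by (simp add: power2_norm_eq_inner[symmetric])
    then show ?thesis using True by (simp add: cinner_self)
  next
    case False
    show ?thesis
    proof (cases "l < i")
      case True
      then show ?thesis using zo that False cinner_commute[of "z i" "z l"] by auto
    next
      case False
      then show ?thesis using zo that \<open>i \<noteq> l\<close> by auto
    qed
  qed
  have AO: "cinner (z i) (As ! r *v z l) = (if i = l then complex_of_real (x i r) else 0)"
    if "i < N" "l < N" "r < m" for i l r
  proof (cases "i = l")
    case True
    then show ?thesis using real_cinner_self_adj[OF sa[OF that(3)]] unfolding x_def by simp
  next
    case False
    show ?thesis
    proof (cases "l < i")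
      case True
      then have "cinner (As ! r *v z l) (z i) = 0" using zo that by auto
      then show ?thesis using False cinner_commute[of "z i" "As ! r *v z l"] by simp
    next
      case False
      then have "i < l" using \<open>i \<noteq> l\<close> by simp
      then have "cinner (As ! r *v z i) (z l) = 0" using zo that by auto
      then show ?thesis using \<open>i \<noteq> l\<close> self_adjoint_cinner[OF sa[OF that(3)], of "z i" "z l"] by simp
    qed
  qed
  define G where "G p = {i. i < N \<and> g i = p}" for p
  define xs where "xs p = (\<Sum>i\<in>G p. complex_of_real (sqrt (lam i)) *s z i)" for p
  have finG: "finite (G p)" for p unfolding G_def by simp
  have GG: "G p \<inter> G q = (if p = q then G p else {})" for p q unfolding G_def by auto
  have gen: "cinner (xs p) (B *v xs q) = (\<Sum>i\<in>G p. \<Sum>l\<in>G q.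
      complex_of_real (sqrt (lam i)) * (complex_of_real (sqrt (lam l)) * cinner (z i) (B *v z l)))"
    for B p q
    unfolding xs_def
    by (simp add: cinner_sum_left cinner_sum_right matvec_sum matvec_smult cinner_scale_left
        cinner_scale_right sum_distrib_left) (subst sum.swap, simp add: mult.left_commute)
  have sq: "complex_of_real (sqrt (lam i)) * (complex_of_real (sqrt (lam i)) * w) = complex_of_real (lam i) * w"
    if "i < N" for i w
  proof -
    have "sqrt (lam i) * sqrt (lam i) = lam i" using gl that by simp
    then show ?thesis by (metis mult.assoc of_real_mult)
  qed
  have xsAO: "cinner (xs p) (As ! r *v xs q) = (if p = q then complex_of_real (a r) else 0)"
    if "p < k" "q < k" "r < m" for p q r
  proof -
    have "cinner (xs p) (As ! r *v xs q) = (\<Sum>i\<in>G p \<inter> G q. complex_of_real (lam i) * complex_of_real (x i r))"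
      unfolding gen
    proof (rule diag_sum[OF finG finG])
      fix i l assume il: "i \<in> G p" "l \<in> G q"
      then have iN: "i < N" "l < N" unfolding G_def by auto
      show "complex_of_real (sqrt (lam i)) * (complex_of_real (sqrt (lam l)) * cinner (z i) (As ! r *v z l))
          = (if i = l then complex_of_real (lam i) * complex_of_real (x i r) else 0)"
        using AO[OF iN that(3)] sq[OF iN(1)] by auto
    qed
    also have "\<dots> = (if p = q then complex_of_real (a r) else 0)"
    proof (cases "p = q")
      case True
      have "(\<Sum>i\<in>G p. complex_of_real (lam i) * complex_of_real (x i r))
          = complex_of_real (\<Sum>i\<in>G p. lam i * x i r)" by simp
      then show ?thesis using True gs that unfolding GG G_def by simp
    qed (simp add: GG)
    finally show ?thesis .
  qed
  have xsON: "cinner (xs p) (xs q) = (if p = q then 1 else 0)" if "p < k" "q < k" for p q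
  proof -
    have "cinner (xs p) (xs q) = cinner (xs p) (mat 1 *v xs q)" by simp
    also have "\<dots> = (\<Sum>i\<in>G p \<inter> G q. complex_of_real (lam i))"
      unfolding gen
    proof (rule diag_sum[OF finG finG])
      fix i l assume il: "i \<in> G p" "l \<in> G q"
      then have iN: "i < N" "l < N" unfolding G_def by auto
      show "complex_of_real (sqrt (lam i)) * (complex_of_real (sqrt (lam l)) * cinner (z i) (mat 1 *v z l))
          = (if i = l then complex_of_real (lam i) else 0)"
        using ON[OF iN] sq[OF iN(1), of 1] by auto
    qed
    also have "\<dots> = (if p = q then 1 else 0)"
    proof (cases "p = q")
      case True
      have "(\<Sum>i\<in>G p. complex_of_real (lam i)) = complex_of_real (\<Sum>i\<in>G p. lam i)" by simp
      then show ?thesis using True gs that unfolding GG G_def by simp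
    qed (simp add: GG)
    finally show ?thesis .
  qed
  define P where "P = (\<Sum>p<k. outer (xs p) (xs p))"
  have Psa: "self_adjoint P" unfolding P_def by (rule proj_self_adjoint)
  have PP: "P ** P = P"
  proof -
    have "P ** mat 1 ** P = 1 *\<^sub>R P"
      unfolding P_def by (rule proj_sandwich[OF self_adjoint_mat1]) (use xsON in simp)
    then show ?thesis by simp
  qed
  have Prank: "rank P = k" unfolding P_def by (rule proj_rank) (use xsON in simp)
  have PAP: "P ** (As ! j) ** P = a j *\<^sub>R P" if "j < m" for j
    unfolding P_def by (rule proj_sandwich[OF sa[OF that]]) (use xsAO that in simp)
  define al where "al = map a [0..<m]"
  have "al \<in> joint_rank_k_numrange k As"
    unfolding joint_rank_k_numrange_def orth_projection_def al_def
    using Psa PP Prank PAP assms(1) by auto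
  then show ?thesis by blast
qed



end
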